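(* Let $\Omega\subset\mathbb{R}^d$ be open and $\phi:\Omega\to\mathbb{R}^{n+1}$ an $n$-times differentiable nondegenerate map. Then for every nonzero linear functional $\ell:\mathbb{R}^{n+1}\to\mathbb{R}$, the set $\{s\in\Omega:\ell(\phi(s))=0\}$ has Lebesgue measure zero. Moreover, if $d=1$, then $\phi^{-1}(\ker\ell)$ is discrete in $\Omega$.
   Context: A curve $\zeta$ in $\mathbb{R}^k$ is nondegenerate at a point if its derivatives there of orders $0,\dots,k-1$ exist and span $\mathbb{R}^k$. $\phi$ is nondegenerate at $s\in\Omega$ if: (1) $D\phi(s):\mathbb{R}^d\to\mathbb{R}^{n+1}$ is injective; let $\mathcal{T}=D\phi(s)(\mathbb{R}^d)$; (2) there are a subspace $\mathcal{L}\ni\phi(s)$ of $\mathbb{R}^{n+1}$ with $\mathcal{T}\oplus\mathcal{L}=\mathbb{R}^{n+1}$, $0\ne v\in\mathcal{T}$, a neighborhood $\Omega_1$ of $s$ and $r_0>0$ such that the curve $\rho_v(r)=\phi(\Omega_1)\cap(rv+\mathcal{L})$, $|r|<r_0$, is nondegenerate at $0$ as a curve in $\mathbb{R}v+\mathcal{L}$. $\phi$ is nondegenerate if it is nondegenerate at every point of $\Omega$. *)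

theory Defs
  imports "HOL-Analysis.Analysis"
begin

text \<open>m-times differentiability on an (open) set: f is Frechet differentiable at every
  point of S with derivative f' x, and for every direction v the map x \<mapsto> f' x v is
  (m-1)-times differentiable on S (equivalently, f' is (m-1)-times differentiable as a map
  into the finite-dimensional space of linear maps).\<close>
primrec ntimes_differentiable_on ::
  "nat \<Rightarrow> ('a::real_normed_vector \<Rightarrow> 'b::real_normed_vector) \<Rightarrow> 'a set \<Rightarrow> bool" where
  "ntimes_differentiable_on 0 f S = True"
| "ntimes_differentiable_on (Suc m) f S =
     (\<exists>f'. (\<forall>x\<in>S. (f has_derivative f' x) (at x)) \<and>
           (\<forall>v. ntimes_differentiable_on m (\<lambda>x. f' x v) S))"

text \<open>D j is the j-th derivative;
  derivatives of order < k-1 exist on a neighbourhood of t0, the (k-1)-st at t0.\<close>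
definition curve_nondegenerate_at ::
  "(real \<Rightarrow> 'b::euclidean_space) \<Rightarrow> real \<Rightarrow> 'b set \<Rightarrow> bool" where
  "curve_nondegenerate_at \<rho> t0 V =
     (let k = dim V in
      \<exists>D e. e > 0 \<and> (\<forall>t\<in>ball t0 e. D 0 t = \<rho> t) \<and>
        (\<forall>j t. Suc j < k \<and> t \<in> ball t0 e \<and> (Suc j < k - 1 \<or> t = t0) \<longrightarrow>
               (D j has_vector_derivative D (Suc j) t) (at t)) \<and>
        span {D j t0 | j. j < k} = V)"

definition nondegenerate_at ::
  "('a::euclidean_space \<Rightarrow> 'b::euclidean_space) \<Rightarrow> 'a set \<Rightarrow> 'a \<Rightarrow> bool" where
  "nondegenerate_at \<phi> \<Omega> s =
     (\<exists>\<phi>'. (\<phi> has_derivative \<phi>') (at s) \<and> inj \<phi>' \<and>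
       (\<exists>L v \<Omega>1 r0 \<rho>.
          subspace L \<and> \<phi> s \<in> L \<and>
          range \<phi>' \<inter> L = {0} \<and> {x + y | x y. x \<in> range \<phi>' \<and> y \<in> L} = UNIV \<and>
          v \<in> range \<phi>' \<and> v \<noteq> 0 \<and>
          \<Omega>1 \<subseteq> \<Omega> \<and> s \<in> interior \<Omega>1 \<and> r0 > 0 \<and>
          (\<forall>r. \<bar>r\<bar> < r0 \<longrightarrow> \<phi> ` \<Omega>1 \<inter> {r *\<^sub>R v + y | y. y \<in> L} = {\<rho> r}) \<and>
          curve_nondegenerate_at \<rho> 0 (span (insert v L))))"

definition nondegenerate_map ::
  "('a::euclidean_space \<Rightarrow> 'b::euclidean_space) \<Rightarrow> 'a set \<Rightarrow> bool" where
  "nondegenerate_map \<phi> \<Omega> = (\<forall>s\<in>\<Omega>. nondegenerate_at \<phi> \<Omega> s)"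

end

theory Submission
  imports Defs
begin


lemma ntimes_linear:
  assumes "bounded_linear l" "ntimes_differentiable_on m f S"
  shows "ntimes_differentiable_on m (\<lambda>x. l (f x)) S"
  using assms(2)
proof (induction m arbitrary: f)
  case 0 then show ?case by simp
next
  case (Suc m)
  then obtain f' where d: "\<forall>x\<in>S. (f has_derivative f' x) (at x)"
    and n: "\<forall>v. ntimes_differentiable_on m (\<lambda>x. f' x v) S" by auto
  have "\<forall>x\<in>S. ((\<lambda>x. l (f x)) has_derivative (\<lambda>v. l (f' x v))) (at x)"
    using d bounded_linear.has_derivative[OF assms(1)] by blast
  moreover have "\<forall>v. ntimes_differentiable_on m (\<lambda>x. l (f' x v)) S"
    using Suc.IH n by blast
  ultimately show ?case by auto
qed

lemma mvt_bound:
  fixes f :: "'a::euclidean_space \<Rightarrow> 'b::real_normed_vector"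
  assumes "f s = 0" "\<And>x. x \<in> ball s d \<Longrightarrow> (f has_derivative f' x) (at x)"
    and "\<And>x w. x \<in> ball s d \<Longrightarrow> norm (f' x w) \<le> e * norm (x - s) ^ i * norm w"
    and "e \<ge> 0" and "t \<in> ball s d"
  shows "norm (f t) \<le> e * norm (t - s) ^ Suc i"
proof -
  define r where "r = norm (t - s)"
  have sub: "cball s r \<subseteq> ball s d" using assms(5) by (auto simp: r_def dist_norm norm_minus_commute)
  have "norm (f t - f s) \<le> (e * r ^ i) * norm (t - s)"
  proof (rule differentiable_bound[of "cball s r" f f'])
    show "convex (cball s r)" by simp
    show "(f has_derivative f' x) (at x within cball s r)" if "x \<in> cball s r" for x
      using assms(2) sub that has_derivative_at_withinI by blast
    show "onorm (f' x) \<le> e * r ^ i" if "x \<in> cball s r" for x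
    proof (rule onorm_le)
      fix w
      have "norm (x - s) \<le> r" using that by (simp add: dist_norm norm_minus_commute)
      then have "e * norm (x - s) ^ i \<le> e * r ^ i"
        by (simp add: assms(4) mult_left_mono power_mono)
      then show "norm (f' x w) \<le> e * r ^ i * norm w"
        using assms(3)[of x w] sub that
        by (meson dual_order.trans mult_right_mono norm_ge_zero subsetD)
    qed
    show "t \<in> cball s r" by (simp add: r_def dist_norm norm_minus_commute)
    show "s \<in> cball s r" using r_def by simp
  qed
  then show ?thesis using assms(1) by (simp add: r_def mult_ac)
qed

lemma linear_nonzero_basis:
  fixes f :: "'a::euclidean_space \<Rightarrow> real"
  assumes "linear f" "f \<noteq> (\<lambda>_. 0)"
  shows "\<exists>b\<in>Basis. f b \<noteq> 0"
proof (rule ccontr)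
  assume "\<not> ?thesis"
  then have "\<forall>b\<in>Basis. f b = 0" by auto
  have "f w = 0" for w
  proof -
    have "f w = f (\<Sum>b\<in>Basis. (w \<bullet> b) *\<^sub>R b)" by (simp add: euclidean_representation)
    also have "\<dots> = (\<Sum>b\<in>Basis. (w \<bullet> b) * f b)"
      using assms(1) by (simp add: linear_sum linear_scale)
    also have "\<dots> = 0" using \<open>\<forall>b\<in>Basis. f b = 0\<close> by simp
    finally show ?thesis .
  qed
  then show False using assms(2) by auto
qed

lemma negligible_regular_zeros:
  fixes g :: "'a::euclidean_space \<Rightarrow> real"
  assumes "open \<Omega>" "\<And>x. x \<in> \<Omega> \<Longrightarrow> (g has_derivative g' x) (at x)"
  shows "negligible {x\<in>\<Omega>. g x = 0 \<and> g' x \<noteq> (\<lambda>_. 0)}"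
proof -
  have lin: "linear (g' x)" if "x \<in> \<Omega>" for x
    using assms(2)[OF that] has_derivative_linear by blast
  have neg: "negligible {x\<in>\<Omega>. g x = 0 \<and> g' x b \<noteq> 0}" if b: "b \<in> Basis" for b
  proof -
    define S where "S = {x\<in>\<Omega>. g x = 0 \<and> g' x b \<noteq> 0}"
    define h where "h x = x - (x \<bullet> b) *\<^sub>R b + g x *\<^sub>R b" for x
    define h' where "h' x w = w - (w \<bullet> b) *\<^sub>R b + g' x w *\<^sub>R b" for x w
    have bb: "b \<bullet> b = 1" using b by simp
    have "negligible {x \<in> S. h x \<in> {y. b \<bullet> y = 0}}"
    proof (rule negligible_differentiable_vimage[where f'=h'])
      show "negligible {y. b \<bullet> y = 0}"
        using negligible_hyperplane[of b 0] b by (auto simp: nonzero_Basis)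
    next
      fix x assume x: "x \<in> S"
      then have xo: "x \<in> \<Omega>" and gb: "g' x b \<noteq> 0" by (auto simp: S_def)
      have "(h has_derivative h' x) (at x)"
        unfolding h_def h'_def
        using assms(2)[OF xo] by (auto intro!: derivative_eq_intros)
      then show "(h has_derivative h' x) (at x within S)"
        using has_derivative_at_withinI by blast
      have lh: "linear (h' x)"
        using lin[OF xo] unfolding h'_def
        by (intro linearI) (auto simp: linear_add linear_scale algebra_simps inner_add_left)
      show "inj (h' x)"
      proof (rule linear_injective_0[THEN iffD2, OF lh], intro allI impI)
        fix w assume w0: "h' x w = 0"
        then have "(h' x w) \<bullet> b = 0" by simp
        then have gw: "g' x w = 0" by (simp add: h'_def inner_diff_left inner_add_left bb)
        then have weq: "w = (w \<bullet> b) *\<^sub>R b" using w0 by (simp add: h'_def)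
        have "g' x w = (w \<bullet> b) * g' x b"
          by (subst weq) (simp add: linear_scale[OF lin[OF xo]])
        then have "w \<bullet> b = 0" using gw gb by simp
        then show "w = 0" using weq by simp
      qed
    qed
    moreover have "{x \<in> S. h x \<in> {y. b \<bullet> y = 0}} = S"
      by (auto simp: S_def h_def inner_diff_right inner_add_right bb inner_commute)
    ultimately show ?thesis by (simp add: S_def)
  qed
  have "{x\<in>\<Omega>. g x = 0 \<and> g' x \<noteq> (\<lambda>_. 0)} \<subseteq> (\<Union>b\<in>Basis. {x\<in>\<Omega>. g x = 0 \<and> g' x b \<noteq> 0})"
    using linear_nonzero_basis lin by fastforce
  moreover have "negligible (\<Union>b\<in>Basis. {x\<in>\<Omega>. g x = 0 \<and> g' x b \<noteq> 0})"
    using neg by (intro negligible_Union) auto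
  ultimately show ?thesis using negligible_subset by blast
qed

definition vanish_ord :: "('a::real_normed_vector \<Rightarrow> real) \<Rightarrow> 'a \<Rightarrow> nat \<Rightarrow> bool" where
  "vanish_ord g s p \<longleftrightarrow> (\<forall>\<epsilon>>0. eventually (\<lambda>t. \<bar>g t\<bar> \<le> \<epsilon> * norm (t - s) ^ p) (nhds s))"

lemma linear_bound_basis:
  fixes f :: "'a::euclidean_space \<Rightarrow> real"
  assumes "linear f"
  shows "\<bar>f w\<bar> \<le> (\<Sum>b\<in>Basis. \<bar>f b\<bar>) * norm w"
proof -
  have "f w = f (\<Sum>b\<in>Basis. (w \<bullet> b) *\<^sub>R b)" by (simp add: euclidean_representation)
  also have "\<dots> = (\<Sum>b\<in>Basis. (w \<bullet> b) * f b)"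
    using assms by (simp add: linear_sum linear_scale)
  finally have "\<bar>f w\<bar> \<le> (\<Sum>b\<in>Basis. \<bar>(w \<bullet> b) * f b\<bar>)" by (simp add: sum_abs)
  also have "\<dots> \<le> (\<Sum>b\<in>Basis. \<bar>f b\<bar> * norm w)"
  proof (rule sum_mono)
    fix b :: 'a assume "b \<in> Basis"
    then have "\<bar>w \<bullet> b\<bar> \<le> norm w" by (simp add: Basis_le_norm)
    then show "\<bar>(w \<bullet> b) * f b\<bar> \<le> \<bar>f b\<bar> * norm w"
      by (metis abs_ge_zero abs_mult mult.commute mult_left_mono)
  qed
  also have "\<dots> = (\<Sum>b\<in>Basis. \<bar>f b\<bar>) * norm w" by (simp add: sum_distrib_right)
  finally show ?thesis .
qed

lemma ae_vanish:
  fixes g :: "'a::euclidean_space \<Rightarrow> real"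
  assumes "open \<Omega>" "ntimes_differentiable_on (Suc m) g \<Omega>"
  shows "negligible {s\<in>\<Omega>. g s = 0 \<and> \<not> vanish_ord g s (Suc m)}"
  using assms(2)
proof (induction m arbitrary: g)
  case 0
  then obtain g' where d: "\<And>x. x\<in>\<Omega> \<Longrightarrow> (g has_derivative g' x) (at x)" by auto
  have "{s\<in>\<Omega>. g s = 0 \<and> \<not> vanish_ord g s (Suc 0)} \<subseteq> {x\<in>\<Omega>. g x = 0 \<and> g' x \<noteq> (\<lambda>_. 0)}"
  proof clarify
    fix s assume s: "s \<in> \<Omega>" "g s = 0" "\<not> vanish_ord g s (Suc 0)" "g' s = (\<lambda>_. 0)"
    have "vanish_ord g s (Suc 0)" unfolding vanish_ord_def
    proof (intro allI impI)
      fix e :: real assume "e > 0"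
      then obtain d where "d > 0" "\<forall>y. norm (y - s) < d \<longrightarrow> norm (g y - g s - g' s (y - s)) \<le> e * norm (y - s)"
        using d[OF s(1)] unfolding has_derivative_at_alt by blast
      then show "eventually (\<lambda>t. \<bar>g t\<bar> \<le> e * norm (t - s) ^ Suc 0) (nhds s)"
        unfolding eventually_nhds_metric dist_norm using s by auto
    qed
    then show False using s by simp
  qed
  then show ?case using negligible_regular_zeros[OF assms(1) d] negligible_subset by blast
next
  case (Suc m)
  then obtain g' where d: "\<And>x. x\<in>\<Omega> \<Longrightarrow> (g has_derivative g' x) (at x)"
    and n: "\<And>v. ntimes_differentiable_on (Suc m) (\<lambda>x. g' x v) \<Omega>" by auto
  define N where "N b = {s\<in>\<Omega>. g' s b = 0 \<and> \<not> vanish_ord (\<lambda>x. g' x b) s (Suc m)}" for b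
  have negN: "negligible (N b)" for b unfolding N_def using Suc.IH[OF n] .
  have lin: "linear (g' x)" if "x \<in> \<Omega>" for x
    using d[OF that] has_derivative_linear by blast
  have "{s\<in>\<Omega>. g s = 0 \<and> \<not> vanish_ord g s (Suc (Suc m))} \<subseteq>
        {x\<in>\<Omega>. g x = 0 \<and> g' x \<noteq> (\<lambda>_. 0)} \<union> (\<Union>b\<in>Basis. N b)"
  proof (rule subsetI, rule ccontr)
    fix s assume s0: "s \<in> {s\<in>\<Omega>. g s = 0 \<and> \<not> vanish_ord g s (Suc (Suc m))}"
      and nn: "s \<notin> {x\<in>\<Omega>. g x = 0 \<and> g' x \<noteq> (\<lambda>_. 0)} \<union> (\<Union>b\<in>Basis. N b)"
    have s: "s \<in> \<Omega>" "g s = 0" "\<not> vanish_ord g s (Suc (Suc m))" using s0 by auto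
    have nz: "\<not> (s \<in> \<Omega> \<and> g s = 0 \<and> g' s \<noteq> (\<lambda>_. 0))" and nN: "s \<notin> (\<Union>b\<in>Basis. N b)"
      using nn by auto
    have g0: "g' s = (\<lambda>_. 0)" using nz s by auto
    have vb: "vanish_ord (\<lambda>x. g' x b) s (Suc m)" if "b \<in> Basis" for b
      using nN that s g0 by (auto simp: N_def)
    have "vanish_ord g s (Suc (Suc m))" unfolding vanish_ord_def
    proof (intro allI impI)
      fix e :: real assume e: "e > 0"
      define e' where "e' = e / real DIM('a)"
      have e': "e' > 0" using e by (simp add: e'_def)
      have ev: "eventually (\<lambda>t. \<forall>b\<in>Basis. \<bar>g' t b\<bar> \<le> e' * norm (t - s) ^ Suc m) (nhds s)"
        using vb e' by (intro eventually_ball_finite) (auto simp: vanish_ord_def)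
      moreover have "eventually (\<lambda>t. t \<in> \<Omega>) (nhds s)"
        using assms(1) s(1) eventually_nhds_in_open by blast
      ultimately have "eventually (\<lambda>t. t \<in> \<Omega> \<and> (\<forall>b\<in>Basis. \<bar>g' t b\<bar> \<le> e' * norm (t - s) ^ Suc m)) (nhds s)"
        by (simp add: eventually_conj)
      then obtain r where r: "r > 0" and rP: "\<And>t. dist t s < r \<Longrightarrow> t \<in> \<Omega> \<and> (\<forall>b\<in>Basis. \<bar>g' t b\<bar> \<le> e' * norm (t - s) ^ Suc m)"
        unfolding eventually_nhds_metric by blast
      have "\<bar>g t\<bar> \<le> e * norm (t - s) ^ Suc (Suc m)" if t: "t \<in> ball s r" for t
      proof -
        have "norm (g t) \<le> e * norm (t - s) ^ Suc (Suc m)"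
        proof (rule mvt_bound[where f = g and f' = g' and d = r])
          show "g s = 0" by (rule s(2))
          show "(g has_derivative g' x) (at x)" if "x \<in> ball s r" for x
            using rP[of x] that d by (auto simp: dist_commute)
          show "norm (g' x w) \<le> e * norm (x - s) ^ Suc m * norm w" if x: "x \<in> ball s r" for x w
          proof -
            have xP: "x \<in> \<Omega>" "\<forall>b\<in>Basis. \<bar>g' x b\<bar> \<le> e' * norm (x - s) ^ Suc m"
              using rP[of x] x by (auto simp: dist_commute)
            have "\<bar>g' x w\<bar> \<le> (\<Sum>b\<in>Basis. \<bar>g' x b\<bar>) * norm w"
              by (rule linear_bound_basis[OF lin[OF xP(1)]])
            also have "\<dots> \<le> (\<Sum>b\<in>(Basis::'a set). e' * norm (x - s) ^ Suc m) * norm w"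
              by (intro mult_right_mono sum_mono) (use xP in auto)
            also have "\<dots> = e * norm (x - s) ^ Suc m * norm w"
              by (simp add: e'_def)
            finally show ?thesis by simp
          qed
        qed (use e t in auto)
        then show ?thesis by simp
      qed
      then show "eventually (\<lambda>t. \<bar>g t\<bar> \<le> e * norm (t - s) ^ Suc (Suc m)) (nhds s)"
        unfolding eventually_nhds_metric using r by (auto simp: dist_commute)
    qed
    then show False using s by simp
  qed
  moreover have "negligible ({x\<in>\<Omega>. g x = 0 \<and> g' x \<noteq> (\<lambda>_. 0)} \<union> (\<Union>b\<in>Basis. N b))"
    using negligible_regular_zeros[OF assms(1) d] negN by auto
  ultimately show ?case using negligible_subset by blast
qed



lemma anti_taylor:
  fixes H :: "nat \<Rightarrow> real \<Rightarrow> real"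
  assumes e: "e > 0"
    and der: "\<And>j r. Suc j \<le> m \<Longrightarrow> \<bar>r\<bar> < e \<Longrightarrow> (Suc j < m \<or> r = 0) \<Longrightarrow>
               (H j has_real_derivative H (Suc j) r) (at r)"
    and z: "\<And>j. j < m \<Longrightarrow> H j 0 = 0"
    and o: "\<And>\<epsilon>. \<epsilon> > 0 \<Longrightarrow> \<exists>\<delta>>0. \<forall>r. \<bar>r\<bar> < \<delta> \<longrightarrow> \<bar>H 0 r\<bar> \<le> \<epsilon> * \<bar>r\<bar> ^ m"
  shows "H m 0 = 0"
proof (cases "m = 0")
  case True
  have "\<bar>H 0 0\<bar> \<le> \<epsilon>" if "\<epsilon> > 0" for \<epsilon>
    using o[OF that] True by force
  then show ?thesis using True
    by (metis abs_ge_zero abs_le_zero_iff dense not_le)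
next
  case False
  define c where "c = H m 0"
  have claim: "\<forall>\<epsilon>>0. \<exists>\<delta>>0. \<forall>r. \<bar>r\<bar> < \<delta> \<longrightarrow> \<bar>H (m - i) r - c * r ^ i / fact i\<bar> \<le> \<epsilon> * \<bar>r\<bar> ^ i"
    if "1 \<le> i" "i \<le> m" for i
    using that
  proof (induction i)
    case 0 then show ?case by simp
  next
    case (Suc i)
    show ?case
    proof (cases "i = 0")
      case True
      have "(H (m - 1) has_real_derivative c) (at 0)"
        using der[of "m - 1" 0] False e by (simp add: c_def)
      then have "\<forall>\<epsilon>>0. \<exists>d>0. \<forall>y. norm (y - 0) < d \<longrightarrow> norm (H (m - 1) y - H (m - 1) 0 - c * (y - 0)) \<le> \<epsilon> * norm (y - 0)"
        unfolding has_field_derivative_def has_derivative_at_alt by blast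
      moreover have "H (m - 1) 0 = 0" using z False by simp
      ultimately show ?thesis using True by (simp add: mult.commute)
    next
      case False
      then have i1: "1 \<le> i" and im: "i < m" using Suc.prems by auto
      note IH = Suc.IH[OF i1, of ] 
      have IH': "\<forall>\<epsilon>>0. \<exists>\<delta>>0. \<forall>r. \<bar>r\<bar> < \<delta> \<longrightarrow> \<bar>H (m - i) r - c * r ^ i / fact i\<bar> \<le> \<epsilon> * \<bar>r\<bar> ^ i"
        using Suc.IH i1 im by simp
      define G where "G r = H (m - Suc i) r - c * r ^ Suc i / fact (Suc i)" for r
      define G' where "G' r = H (m - i) r - c * r ^ i / fact i" for r
      have G0: "G 0 = 0" using z[of "m - Suc i"] im by (simp add: G_def)
      have dG: "(G has_real_derivative G' r) (at r)" if "\<bar>r\<bar> < e" for r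
      proof -
        have "(H (m - Suc i) has_real_derivative H (Suc (m - Suc i)) r) (at r)"
          using der[of "m - Suc i" r] that im i1 by (simp add: Suc_diff_Suc)
        moreover have "Suc (m - Suc i) = m - i" using im by simp
        ultimately have h: "(H (m - Suc i) has_real_derivative H (m - i) r) (at r)" by simp
        have p0: "((\<lambda>r. r ^ Suc i) has_real_derivative real (Suc i) * r ^ i) (at r)"
          using DERIV_pow[of "Suc i" r] by simp
        have p1: "((\<lambda>r. c * r ^ Suc i / fact (Suc i)) has_real_derivative c * (real (Suc i) * r ^ i) / fact (Suc i)) (at r)"
          by (rule DERIV_cdivide[OF DERIV_cmult[OF p0]])
        have "c * (real (Suc i) * r ^ i) / fact (Suc i) = c * r ^ i / fact i"
          by (simp add: fact_Suc del: of_nat_Suc)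
        with p1 have p: "((\<lambda>r. c * r ^ Suc i / fact (Suc i)) has_real_derivative c * r ^ i / fact i) (at r)"
          by simp
        show ?thesis unfolding G_def G'_def using DERIV_diff[OF h p] by simp
      qed
      show ?thesis
      proof (intro allI impI)
        fix \<epsilon> :: real assume ep: "\<epsilon> > 0"
        then obtain \<delta> where d: "\<delta> > 0" "\<forall>r. \<bar>r\<bar> < \<delta> \<longrightarrow> \<bar>G' r\<bar> \<le> \<epsilon> * \<bar>r\<bar> ^ i"
          using IH' unfolding G'_def by blast
        have "\<bar>G r\<bar> \<le> \<epsilon> * \<bar>r\<bar> ^ Suc i" if r: "\<bar>r\<bar> < min \<delta> e" for r
        proof -
          have "norm (G r) \<le> \<epsilon> * norm (r - 0) ^ Suc i"
          proof (rule mvt_bound[where f = G and f' = "\<lambda>x w. G' x * w" and d = "min \<delta> e"])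
            show "(G has_derivative (\<lambda>w. G' x * w)) (at x)" if "x \<in> ball 0 (min \<delta> e)" for x
              using dG[of x] that unfolding has_field_derivative_def by (simp add: dist_norm)
            show "norm (G' x * w) \<le> \<epsilon> * norm (x - 0) ^ i * norm w" if "x \<in> ball 0 (min \<delta> e)" for x w
              using d(2)[rule_format, of x] that
              by (simp add: dist_norm abs_mult mult_right_mono)
          qed (use G0 ep r in \<open>auto simp: dist_norm\<close>)
          then show ?thesis by simp
        qed
        then show "\<exists>\<delta>>0. \<forall>r. \<bar>r\<bar> < \<delta> \<longrightarrow> \<bar>H (m - Suc i) r - c * r ^ Suc i / fact (Suc i)\<bar> \<le> \<epsilon> * \<bar>r\<bar> ^ Suc i"
          using d(1) e by (intro exI[of _ "min \<delta> e"]) (auto simp: G_def)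
      qed
    qed
  qed
  have cl: "\<forall>\<epsilon>>0. \<exists>\<delta>>0. \<forall>r. \<bar>r\<bar> < \<delta> \<longrightarrow> \<bar>H 0 r - c * r ^ m / fact m\<bar> \<le> \<epsilon> * \<bar>r\<bar> ^ m"
    using claim[of m] False by simp
  show ?thesis
  proof (rule ccontr)
    assume "H m 0 \<noteq> 0"
    then have c0: "\<bar>c\<bar> > 0" by (simp add: c_def)
    define \<epsilon> where "\<epsilon> = \<bar>c\<bar> / (4 * fact m)"
    have ep: "\<epsilon> > 0" using c0 by (simp add: \<epsilon>_def)
    obtain d1 where d1: "d1 > 0" "\<forall>r. \<bar>r\<bar> < d1 \<longrightarrow> \<bar>H 0 r - c * r ^ m / fact m\<bar> \<le> \<epsilon> * \<bar>r\<bar> ^ m"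
      using cl ep by blast
    obtain d2 where d2: "d2 > 0" "\<forall>r. \<bar>r\<bar> < d2 \<longrightarrow> \<bar>H 0 r\<bar> \<le> \<epsilon> * \<bar>r\<bar> ^ m"
      using o[OF ep] by blast
    define r where "r = min d1 d2 / 2"
    have r: "r > 0" "\<bar>r\<bar> < d1" "\<bar>r\<bar> < d2" using d1 d2 by (auto simp: r_def)
    have "\<bar>c * r ^ m / fact m\<bar> \<le> \<bar>H 0 r - c * r ^ m / fact m\<bar> + \<bar>H 0 r\<bar>"
      using abs_triangle_ineq4[of "H 0 r" "H 0 r - c * r ^ m / fact m"] by simp
    also have "\<dots> \<le> 2 * \<epsilon> * \<bar>r\<bar> ^ m"
    proof -
      have "\<bar>H 0 r - c * r ^ m / fact m\<bar> \<le> \<epsilon> * \<bar>r\<bar> ^ m" using d1(2) r by blast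
      moreover have "\<bar>H 0 r\<bar> \<le> \<epsilon> * \<bar>r\<bar> ^ m" using d2(2) r by blast
      ultimately show ?thesis by linarith
    qed
    finally have "\<bar>c\<bar> * \<bar>r\<bar> ^ m / fact m \<le> (\<bar>c\<bar> / (2 * fact m)) * \<bar>r\<bar> ^ m"
      by (simp add: \<epsilon>_def abs_mult power_abs)
    moreover have "\<bar>r\<bar> ^ m > 0" using r by simp
    ultimately have "(\<bar>c\<bar> / fact m) * \<bar>r\<bar> ^ m \<le> (\<bar>c\<bar> / (2 * fact m)) * \<bar>r\<bar> ^ m \<and> \<bar>r\<bar> ^ m > 0"
      by simp
    then have "\<bar>c\<bar> / fact m \<le> \<bar>c\<bar> / (2 * fact m)"
      using mult_le_cancel_right_pos by blast
    then show False using c0 by (simp add: field_simps)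
  qed
qed



lemma decomp_Q:
  fixes \<phi>' :: "'a::euclidean_space \<Rightarrow> 'b::euclidean_space"
  assumes lin: "linear \<phi>'" and inj: "inj \<phi>'" and L: "subspace L"
    and cap: "range \<phi>' \<inter> L = {0}" and sum: "{x + y | x y. x \<in> range \<phi>' \<and> y \<in> L} = UNIV"
  shows "\<exists>Q. linear Q \<and> (\<forall>w. Q (\<phi>' w) = w) \<and> (\<forall>y\<in>L. Q y = 0) \<and> (\<forall>x. x - \<phi>' (Q x) \<in> L)"
proof -
  have ex: "\<exists>w. x - \<phi>' w \<in> L" for x
  proof -
    have "x \<in> {x + y | x y. x \<in> range \<phi>' \<and> y \<in> L}" using sum by simp
    then obtain w y where "x = \<phi>' w + y" "y \<in> L" by auto
    then show ?thesis by (intro exI[of _ w]) simp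
  qed
  have uniq: "w = w'" if "x - \<phi>' w \<in> L" "x - \<phi>' w' \<in> L" for x w w'
  proof -
    have "(x - \<phi>' w') - (x - \<phi>' w) \<in> L" using that L subspace_diff by blast
    then have "\<phi>' (w - w') \<in> L" by (simp add: linear_diff[OF lin])
    then have "\<phi>' (w - w') = 0" using cap by blast
    then show ?thesis using inj by (simp add: linear_diff[OF lin] inj_eq)
  qed
  define Q where "Q x = (THE w. x - \<phi>' w \<in> L)" for x
  have Q: "x - \<phi>' (Q x) \<in> L" for x
    unfolding Q_def using ex[of x] uniq by (metis theI)
  have Qeq: "Q x = w" if "x - \<phi>' w \<in> L" for x w
    using uniq[OF Q that] .
  have "linear Q"
  proof (rule linearI)
    fix x y
    have "(x + y) - \<phi>' (Q x + Q y) = (x - \<phi>' (Q x)) + (y - \<phi>' (Q y))"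
      by (simp add: linear_add[OF lin])
    also have "\<dots> \<in> L" using Q L by (simp add: subspace_add)
    finally show "Q (x + y) = Q x + Q y" by (rule Qeq)
  next
    fix c :: real and x
    have "c *\<^sub>R x - \<phi>' (c *\<^sub>R Q x) = c *\<^sub>R (x - \<phi>' (Q x))"
      by (simp add: linear_scale[OF lin] scaleR_diff_right)
    also have "\<dots> \<in> L" using Q L by (simp add: subspace_scale)
    finally show "Q (c *\<^sub>R x) = c *\<^sub>R Q x" by (rule Qeq)
  qed
  moreover have "\<forall>w. Q (\<phi>' w) = w" using L by (auto intro!: Qeq simp: subspace_0)
  moreover have "\<forall>y\<in>L. Q y = 0" using L by (auto intro!: Qeq simp: linear_0[OF lin])
  ultimately show ?thesis using Q by blast
qed

lemma good_point_false:
  fixes \<phi> :: "'a::euclidean_space \<Rightarrow> 'b::euclidean_space" and l :: "'b \<Rightarrow> real"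
  assumes "open \<Omega>" "s \<in> \<Omega>" "\<And>x. x \<in> \<Omega> \<Longrightarrow> \<phi> differentiable (at x)"
    and nd: "nondegenerate_at \<phi> \<Omega> s" and ll: "linear l" and lnz: "l \<noteq> (\<lambda>_. 0)"
    and van: "vanish_ord (\<lambda>t. l (\<phi> t)) s p" and p1: "1 \<le> p" and pD: "DIM('b) \<le> Suc p"
  shows False
proof -
  obtain \<phi>' where d\<phi>0: "(\<phi> has_derivative \<phi>') (at s)" and inj0: "inj \<phi>'"
    and ex: "\<exists>L v \<Omega>1 r0 \<rho>.
          subspace L \<and> \<phi> s \<in> L \<and>
          range \<phi>' \<inter> L = {0} \<and> {x + y | x y. x \<in> range \<phi>' \<and> y \<in> L} = UNIV \<and>
          v \<in> range \<phi>' \<and> v \<noteq> 0 \<and>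
          \<Omega>1 \<subseteq> \<Omega> \<and> s \<in> interior \<Omega>1 \<and> r0 > 0 \<and>
          (\<forall>r. \<bar>r\<bar> < r0 \<longrightarrow> \<phi> ` \<Omega>1 \<inter> {r *\<^sub>R v + y | y. y \<in> L} = {\<rho> r}) \<and>
          curve_nondegenerate_at \<rho> 0 (span (insert v L))"
    using nd unfolding nondegenerate_at_def by blast
  obtain L v \<Omega>1 r0 \<rho> where
    d\<phi>: "(\<phi> has_derivative \<phi>') (at s)" and inj: "inj \<phi>'" and L: "subspace L"
    and \<phi>sL: "\<phi> s \<in> L" and cap: "range \<phi>' \<inter> L = {0}"
    and sum: "{x + y | x y. x \<in> range \<phi>' \<and> y \<in> L} = UNIV"
    and vT: "v \<in> range \<phi>'" and v0: "v \<noteq> 0" and O1: "\<Omega>1 \<subseteq> \<Omega>" and sint: "s \<in> interior \<Omega>1"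
    and r0: "r0 > 0"
    and sl: "\<And>r. \<bar>r\<bar> < r0 \<Longrightarrow> \<phi> ` \<Omega>1 \<inter> {r *\<^sub>R v + y | y. y \<in> L} = {\<rho> r}"
    and cn: "curve_nondegenerate_at \<rho> 0 (span (insert v L))"
    using d\<phi>0 inj0 ex by blast
  have lin: "linear \<phi>'" using d\<phi> has_derivative_linear by blast
  obtain Q where lQ: "linear Q" and Q1: "\<And>w. Q (\<phi>' w) = w" and Q0: "\<And>y. y \<in> L \<Longrightarrow> Q y = 0"
    and QL: "\<And>x. x - \<phi>' (Q x) \<in> L"
    using decomp_Q[OF lin inj L cap sum] by blast
  obtain u where vu: "v = \<phi>' u" using vT by blast
  have u0: "u \<noteq> 0" using v0 vu linear_0[OF lin] by auto
  define V where "V = span (insert v L)"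
  define k where "k = dim V"
  obtain D e where e: "e > 0" and D0: "\<forall>t\<in>ball 0 e. D 0 t = \<rho> t"
    and Dd: "\<forall>j t. Suc j < k \<and> t \<in> ball 0 e \<and> (Suc j < k - 1 \<or> t = 0) \<longrightarrow>
               (D j has_vector_derivative D (Suc j) t) (at t)"
    and spanD: "span {D j 0 | j. j < k} = V"
    using cn unfolding curve_nondegenerate_at_def Let_def V_def k_def by blast
  have bQ: "bounded_linear Q" using lQ linear_conv_bounded_linear by blast
  have bl: "bounded_linear l" using ll linear_conv_bounded_linear by blast
  define F where "F t = Q (\<phi> t)" for t
  have "(F has_derivative (\<lambda>w. Q (\<phi>' w))) (at s)"
    unfolding F_def using bounded_linear.has_derivative[OF bQ d\<phi>] .
  then have dF: "(F has_derivative id) (at s)" using Q1 by (simp add: id_def)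
  have Fs: "F s = 0" using Q0 \<phi>sL by (simp add: F_def)
  obtain d1 where d1: "d1 > 0" "\<forall>y. norm (y - s) < d1 \<longrightarrow> norm (F y - F s - id (y - s)) \<le> (1/2) * norm (y - s)"
  proof -
    have "\<forall>e>0. \<exists>d>0. \<forall>y. norm (y - s) < d \<longrightarrow> norm (F y - F s - id (y - s)) \<le> e * norm (y - s)"
      using dF unfolding has_derivative_at_alt by blast
    then show ?thesis using that by (meson half_gt_zero zero_less_one)
  qed
  obtain d2 where d2: "d2 > 0" "ball s d2 \<subseteq> \<Omega>1" using sint mem_interior by blast
  define \<delta> where "\<delta> = min d1 d2"
  have \<delta>: "\<delta> > 0" "ball s \<delta> \<subseteq> \<Omega>1" using d1 d2 by (auto simp: \<delta>_def)
  have contF: "continuous_on \<Omega> F"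
  proof -
    have "continuous_on \<Omega> \<phi>"
      using assms(3) by (meson differentiable_at_imp_differentiable_on differentiable_imp_continuous_on)
    then show ?thesis unfolding F_def using lQ by (rule linear_continuous_on_compose)
  qed
  have "F s \<in> interior (F ` ball s \<delta>)"
    by (rule sussmann_open_mapping[OF assms(1) contF assms(2) dF, of id])
       (use \<delta> O1 bounded_linear_ident in \<open>auto simp: id_def\<close>)
  then have "0 \<in> interior (F ` ball s \<delta>)" using Fs by simp
  then obtain \<eta> where \<eta>: "\<eta> > 0" "ball 0 \<eta> \<subseteq> F ` ball s \<delta>"
    using mem_interior by blast
  define nu where "nu = norm u"
  have nu: "nu > 0" using u0 by (simp add: nu_def)
  have key: "\<exists>t. norm (t - s) \<le> 2 * \<bar>r\<bar> * nu \<and> \<phi> t = \<rho> r" if r: "\<bar>r\<bar> < min r0 (\<eta> / nu)" for r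
  proof -
    have "norm (r *\<^sub>R u) < \<eta>" using r nu by (simp add: nu_def pos_less_divide_eq mult.commute)
    then have "r *\<^sub>R u \<in> F ` ball s \<delta>" using \<eta> by auto
    then obtain t where t: "t \<in> ball s \<delta>" "F t = r *\<^sub>R u" by auto
    have tO: "t \<in> \<Omega>1" using t \<delta> by auto
    have "\<phi>' (Q (\<phi> t)) = r *\<^sub>R v" using t by (simp add: F_def vu linear_scale[OF lin])
    then have "\<phi> t = r *\<^sub>R v + (\<phi> t - \<phi>' (Q (\<phi> t)))" by simp
    then have "\<phi> t \<in> \<phi> ` \<Omega>1 \<inter> {r *\<^sub>R v + y | y. y \<in> L}" using QL tO by blast
    then have pt: "\<phi> t = \<rho> r" using sl r by auto
    have "norm (t - s) < d1" using t by (auto simp: \<delta>_def dist_norm norm_minus_commute)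
    then have "norm (F t - (t - s)) \<le> (1/2) * norm (t - s)" using d1 Fs by auto
    moreover have "norm (t - s) \<le> norm (F t) + norm (F t - (t - s))"
      using norm_triangle_ineq4[of "F t" "F t - (t - s)"] by simp
    moreover have "norm (F t) = \<bar>r\<bar> * nu" using t by (simp add: nu_def)
    ultimately have "norm (t - s) \<le> 2 * \<bar>r\<bar> * nu" by linarith
    then show ?thesis using pt by blast
  qed
  have obound: "\<exists>\<delta>'>0. \<forall>r. \<bar>r\<bar> < \<delta>' \<longrightarrow> \<bar>l (\<rho> r)\<bar> \<le> \<epsilon> * \<bar>r\<bar> ^ p" if ep: "\<epsilon> > 0" for \<epsilon>
  proof -
    define \<epsilon>' where "\<epsilon>' = \<epsilon> / (2 * nu) ^ p"
    have ep': "\<epsilon>' > 0" using ep nu by (simp add: \<epsilon>'_def)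
    obtain d where d: "d > 0" "\<forall>t. dist t s < d \<longrightarrow> \<bar>l (\<phi> t)\<bar> \<le> \<epsilon>' * norm (t - s) ^ p"
      using van ep' unfolding vanish_ord_def eventually_nhds_metric by blast
    define \<delta>' where "\<delta>' = min (min r0 (\<eta> / nu)) (d / (2 * nu))"
    have "\<delta>' > 0" using r0 \<eta> nu d by (simp add: \<delta>'_def)
    moreover have "\<bar>l (\<rho> r)\<bar> \<le> \<epsilon> * \<bar>r\<bar> ^ p" if r: "\<bar>r\<bar> < \<delta>'" for r
    proof -
      obtain t where t: "norm (t - s) \<le> 2 * \<bar>r\<bar> * nu" "\<phi> t = \<rho> r"
        using key[of r] r by (auto simp: \<delta>'_def)
      have "2 * \<bar>r\<bar> * nu < d" using r nu by (simp add: \<delta>'_def pos_less_divide_eq mult.commute mult.left_commute)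
      then have "dist t s < d" using t by (simp add: dist_norm)
      then have "\<bar>l (\<rho> r)\<bar> \<le> \<epsilon>' * norm (t - s) ^ p" using d t by auto
      also have "\<dots> \<le> \<epsilon>' * (2 * \<bar>r\<bar> * nu) ^ p"
        using t ep' by (intro mult_left_mono power_mono) auto
      also have "\<dots> = \<epsilon> * \<bar>r\<bar> ^ p"
        using nu by (simp add: \<epsilon>'_def power_mult_distrib field_simps)
      finally show ?thesis .
    qed
    ultimately show ?thesis by blast
  qed
  have kD: "k \<le> DIM('b)" unfolding k_def by (rule dim_subset_UNIV)
  have lD: "\<forall>j<k. l (D j 0) = 0"
  proof (intro allI)
    fix j show "j < k \<longrightarrow> l (D j 0) = 0"
    proof (induction j rule: less_induct)
      case (less j)
      show ?case
      proof
        assume jk: "j < k"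
        show "l (D j 0) = 0"
        proof (rule anti_taylor[where H = "\<lambda>i r. l (D i r)" and m = j, OF e])
          fix i r assume i: "Suc i \<le> j" "\<bar>r\<bar> < e" "Suc i < j \<or> r = 0"
          have "(D i has_vector_derivative D (Suc i) r) (at r)"
          proof -
            have "Suc i < k" "Suc i < k - 1 \<or> r = 0" "r \<in> ball 0 e" using i jk by (auto simp: dist_norm)
            then show ?thesis using Dd by blast
          qed
          then show "((\<lambda>r. l (D i r)) has_real_derivative l (D (Suc i) r)) (at r)"
            using bounded_linear.has_vector_derivative[OF bl]
            by (simp add: has_real_derivative_iff_has_vector_derivative)
        next
          fix i assume "i < j" then show "l (D i 0) = 0" using less jk by auto
        next
          fix \<epsilon> :: real assume "\<epsilon> > 0"
          then obtain \<delta>' where d': "\<delta>' > 0" "\<forall>r. \<bar>r\<bar> < \<delta>' \<longrightarrow> \<bar>l (\<rho> r)\<bar> \<le> \<epsilon> * \<bar>r\<bar> ^ p"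
            using obound by blast
          have jp: "j \<le> p" using jk kD pD by linarith
          have "\<bar>l (D 0 r)\<bar> \<le> \<epsilon> * \<bar>r\<bar> ^ j" if r: "\<bar>r\<bar> < min \<delta>' (min e 1)" for r
          proof -
            have "D 0 r = \<rho> r" using D0 r by (auto simp: dist_norm)
            then have "\<bar>l (D 0 r)\<bar> \<le> \<epsilon> * \<bar>r\<bar> ^ p" using d' r by auto
            also have "\<dots> \<le> \<epsilon> * \<bar>r\<bar> ^ j"
              using r jp \<open>\<epsilon> > 0\<close> by (intro mult_left_mono power_decreasing) auto
            finally show ?thesis .
          qed
          then show "\<exists>\<delta>>0. \<forall>r. \<bar>r\<bar> < \<delta> \<longrightarrow> \<bar>l (D 0 r)\<bar> \<le> \<epsilon> * \<bar>r\<bar> ^ j"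
            using d' e by (intro exI[of _ "min \<delta>' (min e 1)"]) auto
        qed
      qed
    qed
  qed
  have lV: "l x = 0" if "x \<in> V" for x
    using linear_eq_0_on_span[OF ll, of "{D j 0 | j. j < k}" x] lD that spanD by auto
  have lL: "l y = 0" if "y \<in> L" for y
    using lV that span_superset[of "insert v L"] by (auto simp: V_def)
  have da: "((\<lambda>t. l (\<phi> t)) has_derivative (\<lambda>w. l (\<phi>' w))) (at s)"
    using bounded_linear.has_derivative[OF bl d\<phi>] .
  have ls: "l (\<phi> s) = 0" using lL \<phi>sL by simp
  have db: "((\<lambda>t. l (\<phi> t)) has_derivative (\<lambda>_. 0)) (at s)"
    unfolding has_derivative_at_alt
  proof (intro conjI allI impI)
    show "bounded_linear (\<lambda>_. 0 :: real)" by simp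
    fix \<epsilon> :: real assume ep: "\<epsilon> > 0"
    obtain d where d: "d > 0" "\<forall>t. dist t s < d \<longrightarrow> \<bar>l (\<phi> t)\<bar> \<le> \<epsilon> * norm (t - s) ^ p"
      using van ep unfolding vanish_ord_def eventually_nhds_metric by blast
    have "norm (l (\<phi> y) - l (\<phi> s) - 0) \<le> \<epsilon> * norm (y - s)" if y: "norm (y - s) < min d 1" for y
    proof -
      have "\<bar>l (\<phi> y)\<bar> \<le> \<epsilon> * norm (y - s) ^ p" using d y by (auto simp: dist_norm)
      also have "\<dots> \<le> \<epsilon> * norm (y - s) ^ 1"
        using y p1 ep by (intro mult_left_mono power_decreasing) auto
      finally show ?thesis using ls by simp
    qed
    then show "\<exists>d>0. \<forall>y. norm (y - s) < d \<longrightarrow> norm (l (\<phi> y) - l (\<phi> s) - 0) \<le> \<epsilon> * norm (y - s)"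
      using d(1) by (intro exI[of _ "min d 1"]) auto
  qed
  have eq0: "(\<lambda>w. l (\<phi>' w)) = (\<lambda>_. 0)" using has_derivative_unique[OF da db] .
  have lT: "l (\<phi>' w) = 0" for w using fun_cong[OF eq0, of w] by simp
  have "l x = 0" for x
  proof -
    have "l x = l (\<phi>' (Q x) + (x - \<phi>' (Q x)))" by simp
    also have "\<dots> = l (\<phi>' (Q x)) + l (x - \<phi>' (Q x))" by (rule linear_add[OF ll])
    also have "\<dots> = 0" using lT lL QL by simp
    finally show ?thesis .
  qed
  then show False using lnz by auto
qed



lemma one_dim_multiple:
  fixes u w :: "'a::euclidean_space"
  assumes "DIM('a) = 1" "u \<noteq> 0"
  shows "\<exists>c. w = c *\<^sub>R u"
proof -
  have "card (Basis :: 'a set) = 1" using assms(1) by simp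
  then obtain b :: 'a where B: "Basis = {b}" by (rule card_1_singletonE)
  have rep: "(x \<bullet> b) *\<^sub>R b = x" for x :: 'a
    using euclidean_representation[of x] unfolding B by simp
  have ub: "u \<bullet> b \<noteq> 0"
  proof
    assume "u \<bullet> b = 0"
    then have "u = 0" using rep[of u] by simp
    then show False using assms(2) by simp
  qed
  have "((w \<bullet> b) / (u \<bullet> b)) *\<^sub>R u = ((w \<bullet> b) / (u \<bullet> b)) *\<^sub>R ((u \<bullet> b) *\<^sub>R b)"
    using rep[of u] by simp
  also have "\<dots> = (w \<bullet> b) *\<^sub>R b" using ub by simp
  also have "\<dots> = w" using rep[of w] by simp
  finally show ?thesis by (intro exI[of _ "(w \<bullet> b) / (u \<bullet> b)"]) simp
qed

lemma phi_zero_dim1: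
  fixes \<phi> :: "'a::euclidean_space \<Rightarrow> 'b::euclidean_space"
  assumes "DIM('b) = 1" "nondegenerate_at \<phi> \<Omega> x"
  shows "\<phi> x = 0"
proof -
  obtain \<phi>' L v where d\<phi>: "(\<phi> has_derivative \<phi>') (at x)" and L: "subspace L" and xL: "\<phi> x \<in> L"
    and cap: "range \<phi>' \<inter> L = {0}" and vT: "v \<in> range \<phi>'" and v0: "v \<noteq> 0"
  proof -
    from assms(2) obtain \<phi>' L v where "(\<phi> has_derivative \<phi>') (at x)" "subspace L" "\<phi> x \<in> L"
      "range \<phi>' \<inter> L = {0}" "v \<in> range \<phi>'" "v \<noteq> 0"
      unfolding nondegenerate_at_def by (elim exE conjE) (rule that; assumption)
    then show ?thesis using that by blast
  qed
  have lin: "linear \<phi>'" using d\<phi> has_derivative_linear by blast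
  obtain c where c: "\<phi> x = c *\<^sub>R v" using one_dim_multiple[OF assms(1) v0] by blast
  obtain u where "v = \<phi>' u" using vT by blast
  then have "\<phi> x = \<phi>' (c *\<^sub>R u)" using c by (simp add: linear_scale[OF lin])
  then have "\<phi> x \<in> range \<phi>'" by simp
  then show ?thesis using xL cap by blast
qed

lemma d1_isolated:
  fixes \<phi> :: "'a::euclidean_space \<Rightarrow> 'b::euclidean_space" and l :: "'b \<Rightarrow> real"
  assumes "open \<Omega>" "s \<in> \<Omega>" "\<And>x. x \<in> \<Omega> \<Longrightarrow> \<phi> differentiable (at x)"
    and nd: "nondegenerate_at \<phi> \<Omega> s" and ll: "linear l" and lnz: "l \<noteq> (\<lambda>_. 0)"
    and d1a: "DIM('a) = 1" and lim: "s islimpt {t \<in> \<Omega>. l (\<phi> t) = 0}"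
  shows False
proof -
  obtain \<phi>' where d\<phi>0: "(\<phi> has_derivative \<phi>') (at s)" and inj0: "inj \<phi>'"
    and ex: "\<exists>L v \<Omega>1 r0 \<rho>.
          subspace L \<and> \<phi> s \<in> L \<and>
          range \<phi>' \<inter> L = {0} \<and> {x + y | x y. x \<in> range \<phi>' \<and> y \<in> L} = UNIV \<and>
          v \<in> range \<phi>' \<and> v \<noteq> 0 \<and>
          \<Omega>1 \<subseteq> \<Omega> \<and> s \<in> interior \<Omega>1 \<and> r0 > 0 \<and>
          (\<forall>r. \<bar>r\<bar> < r0 \<longrightarrow> \<phi> ` \<Omega>1 \<inter> {r *\<^sub>R v + y | y. y \<in> L} = {\<rho> r}) \<and>
          curve_nondegenerate_at \<rho> 0 (span (insert v L))"
    using nd unfolding nondegenerate_at_def by blast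
  obtain L v \<Omega>1 r0 \<rho> where
    d\<phi>: "(\<phi> has_derivative \<phi>') (at s)" and inj: "inj \<phi>'" and L: "subspace L"
    and \<phi>sL: "\<phi> s \<in> L" and cap: "range \<phi>' \<inter> L = {0}"
    and sum: "{x + y | x y. x \<in> range \<phi>' \<and> y \<in> L} = UNIV"
    and vT: "v \<in> range \<phi>'" and v0: "v \<noteq> 0" and O1: "\<Omega>1 \<subseteq> \<Omega>" and sint: "s \<in> interior \<Omega>1"
    and r0: "r0 > 0"
    and sl: "\<And>r. \<bar>r\<bar> < r0 \<Longrightarrow> \<phi> ` \<Omega>1 \<inter> {r *\<^sub>R v + y | y. y \<in> L} = {\<rho> r}"
    and cn: "curve_nondegenerate_at \<rho> 0 (span (insert v L))"
    using d\<phi>0 inj0 ex by blast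
  have lin: "linear \<phi>'" using d\<phi> has_derivative_linear by blast
  obtain Q where lQ: "linear Q" and Q1: "\<And>w. Q (\<phi>' w) = w" and Q0: "\<And>y. y \<in> L \<Longrightarrow> Q y = 0"
    and QL: "\<And>x. x - \<phi>' (Q x) \<in> L"
    using decomp_Q[OF lin inj L cap sum] by blast
  obtain u where vu: "v = \<phi>' u" using vT by blast
  have u0: "u \<noteq> 0" using v0 vu linear_0[OF lin] by auto
  define V where "V = span (insert v L)"
  define k where "k = dim V"
  obtain D e where e: "e > 0" and D0: "\<forall>t\<in>ball 0 e. D 0 t = \<rho> t"
    and Dd: "\<forall>j t. Suc j < k \<and> t \<in> ball 0 e \<and> (Suc j < k - 1 \<or> t = 0) \<longrightarrow>
               (D j has_vector_derivative D (Suc j) t) (at t)"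
    and spanD: "span {D j 0 | j. j < k} = V"
    using cn unfolding curve_nondegenerate_at_def Let_def V_def k_def by blast
  have bQ: "bounded_linear Q" using lQ linear_conv_bounded_linear by blast
  have bl: "bounded_linear l" using ll linear_conv_bounded_linear by blast
  define F where "F t = Q (\<phi> t)" for t
  have "(F has_derivative (\<lambda>w. Q (\<phi>' w))) (at s)"
    unfolding F_def using bounded_linear.has_derivative[OF bQ d\<phi>] .
  then have dF: "(F has_derivative id) (at s)" using Q1 by (simp add: id_def)
  have Fs: "F s = 0" using Q0 \<phi>sL by (simp add: F_def)
  obtain d1 where d1: "d1 > 0" "\<forall>y. norm (y - s) < d1 \<longrightarrow> norm (F y - F s - id (y - s)) \<le> (1/2) * norm (y - s)"
  proof -
    have "\<forall>e>0. \<exists>d>0. \<forall>y. norm (y - s) < d \<longrightarrow> norm (F y - F s - id (y - s)) \<le> e * norm (y - s)"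
      using dF unfolding has_derivative_at_alt by blast
    then show ?thesis using that by (meson half_gt_zero zero_less_one)
  qed
  obtain d2 where d2: "d2 > 0" "ball s d2 \<subseteq> \<Omega>1" using sint mem_interior by blast
  define \<delta> where "\<delta> = min d1 d2"
  have \<delta>: "\<delta> > 0" "ball s \<delta> \<subseteq> \<Omega>1" using d1 d2 by (auto simp: \<delta>_def)
  define cf where "cf t = (F t \<bullet> u) / (u \<bullet> u)" for t
  have Fcf: "F t = cf t *\<^sub>R u" for t
  proof -
    obtain c where c: "F t = c *\<^sub>R u" using one_dim_multiple[OF d1a u0] by blast
    then show ?thesis using u0 by (simp add: cf_def)
  qed
  have contF: "isCont F s" using dF has_derivative_continuous by blast
  have contcf: "isCont cf s" unfolding cf_def using contF u0 by (intro continuous_intros) auto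
  have cfs: "cf s = 0" using Fs by (simp add: cf_def)
  have ls: "l (\<phi> s) = 0"
  proof (rule ccontr)
    assume ne: "l (\<phi> s) \<noteq> 0"
    have "isCont (\<lambda>t. l (\<phi> t)) s"
      using bounded_linear.has_derivative[OF bl d\<phi>] has_derivative_continuous by blast
    then obtain d where d: "d > 0" "\<forall>y. dist s y < d \<longrightarrow> l (\<phi> y) \<noteq> 0"
      using continuous_at_avoid[of s "\<lambda>t. l (\<phi> t)" 0] ne by blast
    obtain t where "t \<in> {t \<in> \<Omega>. l (\<phi> t) = 0}" "t \<noteq> s" "dist t s < d"
      using lim d(1) unfolding islimpt_approachable by blast
    then show False using d(2) by (auto simp: dist_commute)
  qed
  have \<rho>0: "\<rho> 0 = \<phi> s"
  proof -
    have "s \<in> \<Omega>1" using sint interior_subset by blast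
    moreover have "\<phi> s = 0 *\<^sub>R v + \<phi> s" by simp
    ultimately have mem: "\<phi> s \<in> \<phi> ` \<Omega>1 \<inter> {0 *\<^sub>R v + y | y. y \<in> L}" using \<phi>sL by blast
    have X: "\<phi> ` \<Omega>1 \<inter> {0 *\<^sub>R v + y | y. y \<in> L} = {\<rho> 0}" by (rule sl) (use r0 in simp)
    from mem have "\<phi> s \<in> {\<rho> 0}" unfolding X .
    then show ?thesis by simp
  qed
  have acc0: "\<exists>r. 0 < \<bar>r\<bar> \<and> \<bar>r\<bar> < \<epsilon> \<and> \<bar>r\<bar> < e \<and> l (D 0 r) = 0" if ep: "\<epsilon> > 0" for \<epsilon>
  proof -
    define \<epsilon>1 where "\<epsilon>1 = min \<epsilon> (min r0 e)"
    have "\<epsilon>1 > 0" using ep r0 e by (simp add: \<epsilon>1_def)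
    then obtain d3 where d3: "d3 > 0" "\<forall>t. dist t s < d3 \<longrightarrow> dist (cf t) (cf s) < \<epsilon>1"
      using contcf unfolding continuous_at_eps_delta by blast
    obtain t where t: "t \<in> {t \<in> \<Omega>. l (\<phi> t) = 0}" "t \<noteq> s" "dist t s < min \<delta> d3"
      using lim \<delta>(1) d3(1) unfolding islimpt_approachable by (metis min_less_iff_conj)
    define r where "r = cf t"
    have r: "\<bar>r\<bar> < \<epsilon>1" using d3 t cfs by (auto simp: r_def)
    have tO: "t \<in> \<Omega>1" using t \<delta> by (auto simp: dist_commute)
    have Ft: "F t = r *\<^sub>R u" using Fcf by (simp add: r_def)
    have "\<phi>' (Q (\<phi> t)) = r *\<^sub>R v" using Ft by (simp add: F_def vu linear_scale[OF lin])
    then have "\<phi> t = r *\<^sub>R v + (\<phi> t - \<phi>' (Q (\<phi> t)))" by simp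
    then have "\<phi> t \<in> \<phi> ` \<Omega>1 \<inter> {r *\<^sub>R v + y | y. y \<in> L}" using QL tO by blast
    moreover have "\<bar>r\<bar> < r0" using r by (simp add: \<epsilon>1_def)
    ultimately have pt: "\<phi> t = \<rho> r" using sl by auto
    have "r \<noteq> 0"
    proof
      assume "r = 0"
      then have "F t = 0" using Ft by simp
      moreover have "norm (t - s) < d1" using t by (auto simp: \<delta>_def dist_norm)
      ultimately have "norm (F t - F s - id (t - s)) \<le> (1/2) * norm (t - s)" using d1(2) by blast
      with \<open>F t = 0\<close> Fs have "norm (t - s) \<le> (1/2) * norm (t - s)" by (simp add: norm_minus_commute)
      then have "t = s" by simp
      then show False using t by simp
    qed
    moreover have "D 0 r = \<rho> r" using D0 r by (auto simp: \<epsilon>1_def dist_norm)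
    ultimately show ?thesis using r t pt by (auto simp: \<epsilon>1_def)
  qed
  have claim: "j < k \<longrightarrow> l (D j 0) = 0 \<and> (Suc j < k \<longrightarrow> (\<forall>\<epsilon>>0. \<exists>r. 0 < \<bar>r\<bar> \<and> \<bar>r\<bar> < \<epsilon> \<and> \<bar>r\<bar> < e \<and> l (D j r) = 0))" for j
  proof (induction j)
    case 0
    have "D 0 0 = \<rho> 0" using D0 e by auto
    then show ?case using \<rho>0 ls acc0 by auto
  next
    case (Suc j)
    show ?case
    proof
      assume jk: "Suc j < k"
      then have IH: "l (D j 0) = 0" "\<forall>\<epsilon>>0. \<exists>r. 0 < \<bar>r\<bar> \<and> \<bar>r\<bar> < \<epsilon> \<and> \<bar>r\<bar> < e \<and> l (D j r) = 0"
        using Suc.IH by auto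
      have dH: "((\<lambda>r. l (D j r)) has_real_derivative l (D (Suc j) r)) (at r)"
        if "\<bar>r\<bar> < e" "Suc j < k - 1 \<or> r = 0" for r
      proof -
        have "(D j has_vector_derivative D (Suc j) r) (at r)"
          using Dd jk that by (auto simp: dist_norm)
        then show ?thesis
          using bounded_linear.has_vector_derivative[OF bl]
          by (simp add: has_real_derivative_iff_has_vector_derivative)
      qed
      define c where "c = l (D (Suc j) 0)"
      have c0: "c = 0"
      proof (rule ccontr)
        assume cne: "c \<noteq> 0"
        have "((\<lambda>r. l (D j r)) has_derivative (\<lambda>h. c * h)) (at 0)"
          using dH[of 0] e unfolding has_field_derivative_def c_def by simp
        then have "\<forall>\<epsilon>>0. \<exists>d>0. \<forall>y. norm (y - 0) < d \<longrightarrow> norm (l (D j y) - l (D j 0) - c * (y - 0)) \<le> \<epsilon> * norm (y - 0)"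
          unfolding has_derivative_at_alt by blast
        moreover have cpos: "\<bar>c\<bar> / 2 > 0" using cne by simp
        ultimately obtain d where d: "d > 0" "\<forall>y. norm (y - 0) < d \<longrightarrow> norm (l (D j y) - l (D j 0) - c * (y - 0)) \<le> (\<bar>c\<bar> / 2) * norm (y - 0)"
          by blast
        obtain r where r: "0 < \<bar>r\<bar>" "\<bar>r\<bar> < d" "l (D j r) = 0" using IH(2) d(1) by blast
        have "norm (l (D j r) - l (D j 0) - c * (r - 0)) \<le> (\<bar>c\<bar> / 2) * norm (r - 0)" using d(2) r(2) by auto
        then have "\<bar>c\<bar> * \<bar>r\<bar> \<le> (\<bar>c\<bar> / 2) * \<bar>r\<bar>" using r(3) IH(1) by (simp add: abs_mult)
        moreover have "\<bar>c\<bar> * \<bar>r\<bar> > 0" using cne r by simp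
        ultimately show False by simp
      qed
      have acc: "\<forall>\<epsilon>>0. \<exists>r. 0 < \<bar>r\<bar> \<and> \<bar>r\<bar> < \<epsilon> \<and> \<bar>r\<bar> < e \<and> l (D (Suc j) r) = 0"
        if jk2: "Suc (Suc j) < k"
      proof (intro allI impI)
        fix \<epsilon> :: real assume ep: "\<epsilon> > 0"
        obtain r where r: "0 < \<bar>r\<bar>" "\<bar>r\<bar> < \<epsilon>" "\<bar>r\<bar> < e" "l (D j r) = 0" using IH(2) ep by blast
        define a where "a = min 0 r"
        define b where "b = max 0 r"
        have ab: "a < b" using r by (auto simp: a_def b_def)
        have inab: "\<bar>x\<bar> \<le> \<bar>r\<bar>" if "a \<le> x" "x \<le> b" for x
          using that by (auto simp: a_def b_def)
        have dH2: "((\<lambda>r. l (D j r)) has_real_derivative l (D (Suc j) x)) (at x)" if "a \<le> x" "x \<le> b" for x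
        proof -
          have "Suc j < k - 1" using jk2 by linarith
          moreover have "\<bar>x\<bar> < e" using inab[OF that] r by linarith
          ultimately show ?thesis using dH[of x] by blast
        qed
        have "\<exists>z. a < z \<and> z < b \<and> (\<lambda>h. h * l (D (Suc j) z)) = (\<lambda>v. 0)"
        proof (rule Rolle_deriv[OF ab])
          show "l (D j a) = l (D j b)" using IH(1) r(4) by (auto simp: a_def b_def)
          show "continuous_on {a..b} (\<lambda>r. l (D j r))"
            using dH2 by (meson DERIV_isCont atLeastAtMost_iff continuous_at_imp_continuous_on)
          show "((\<lambda>r. l (D j r)) has_derivative (\<lambda>h. h * l (D (Suc j) x))) (at x)" if "a < x" "x < b" for x
          proof -
            have eq: "(\<lambda>h. h * l (D (Suc j) x)) = (*) (l (D (Suc j) x))" by (rule ext) (simp add: mult.commute)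
            have "a \<le> x" "x \<le> b" using that by auto
            then show ?thesis using dH2[of x] unfolding has_field_derivative_def eq by blast
          qed
        qed
        then obtain z where z: "a < z" "z < b" "(\<lambda>h. h * l (D (Suc j) z)) = (\<lambda>v. 0)" by blast
        have "l (D (Suc j) z) = 0" using fun_cong[OF z(3), of 1] by simp
        moreover have "0 < \<bar>z\<bar>" "\<bar>z\<bar> < \<bar>r\<bar>" using z r by (auto simp: a_def b_def)
        ultimately show "\<exists>r. 0 < \<bar>r\<bar> \<and> \<bar>r\<bar> < \<epsilon> \<and> \<bar>r\<bar> < e \<and> l (D (Suc j) r) = 0"
          using r by (intro exI[of _ z]) auto
      qed
      show "l (D (Suc j) 0) = 0 \<and> (Suc (Suc j) < k \<longrightarrow> (\<forall>\<epsilon>>0. \<exists>r. 0 < \<bar>r\<bar> \<and> \<bar>r\<bar> < \<epsilon> \<and> \<bar>r\<bar> < e \<and> l (D (Suc j) r) = 0))"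
        using c0 acc by (simp add: c_def)
    qed
  qed
  have lV: "l x = 0" if "x \<in> V" for x
    using linear_eq_0_on_span[OF ll, of "{D j 0 | j. j < k}" x] claim that spanD by auto
  have "l x = 0" for x
  proof -
    obtain c where c: "Q x = c *\<^sub>R u" using one_dim_multiple[OF d1a u0] by blast
    have "\<phi>' (Q x) = c *\<^sub>R v" using c by (simp add: vu linear_scale[OF lin])
    then have "\<phi>' (Q x) \<in> V" unfolding V_def by (simp add: span_base span_scale)
    moreover have "x - \<phi>' (Q x) \<in> V" unfolding V_def using QL by (simp add: span_base)
    ultimately have "\<phi>' (Q x) + (x - \<phi>' (Q x)) \<in> V" unfolding V_def by (rule span_add)
    then show ?thesis using lV by simp
  qed
  then show False using lnz by auto
qed


theorem proposition5p1:
  fixes \<phi> :: "'a::euclidean_space \<Rightarrow> 'b::euclidean_space"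
    and \<Omega> :: "'a set" and l :: "'b \<Rightarrow> real"
  assumes "open \<Omega>"
    and "ntimes_differentiable_on (DIM('b) - 1) \<phi> \<Omega>"
    and "nondegenerate_map \<phi> \<Omega>"
    and "linear l" and "l \<noteq> (\<lambda>_. 0)"
  shows "negligible {s \<in> \<Omega>. l (\<phi> s) = 0} \<and>
         (DIM('a) = 1 \<longrightarrow> (\<forall>s\<in>\<Omega>. \<not> s islimpt {t \<in> \<Omega>. l (\<phi> t) = 0}))"
proof (cases "DIM('b) = 1")
  case True
  have "\<Omega> = {}"
  proof (rule ccontr)
    assume "\<Omega> \<noteq> {}"
    then obtain s where s: "s \<in> \<Omega>" by blast
    have z: "\<phi> x = 0" if "x \<in> \<Omega>" for x
      using phi_zero_dim1[OF True] assms(3) that unfolding nondegenerate_map_def by blast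
    obtain \<phi>' where d\<phi>: "(\<phi> has_derivative \<phi>') (at s)" and inj: "inj \<phi>'"
      using assms(3) s unfolding nondegenerate_map_def nondegenerate_at_def by blast
    have "(\<phi> has_derivative (\<lambda>_. 0)) (at s)"
      by (rule has_derivative_transform_within_open[of "\<lambda>_. 0" "\<lambda>_. 0" s UNIV \<Omega>])
         (use assms(1) s z in auto)
    then have "\<phi>' = (\<lambda>_. 0)" using has_derivative_unique[OF d\<phi>] by blast
    moreover obtain b :: 'a where "b \<in> Basis" by (meson all_not_in_conv nonempty_Basis)
    then have "b \<noteq> 0" by (simp add: nonzero_Basis)
    ultimately have "\<phi>' b = \<phi>' 0" "b \<noteq> 0" by auto
    then show False using inj by (simp add: inj_eq)
  qed
  then show ?thesis by simp
next
  case False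
  have "DIM('b) \<ge> 2" using False DIM_positive[where 'a='b] by linarith
  then obtain m where m: "DIM('b) - 1 = Suc m" by (intro that[of "DIM('b) - 2"]) linarith
  have bl: "bounded_linear l" using assms(4) linear_conv_bounded_linear by blast
  have nt: "ntimes_differentiable_on (Suc m) \<phi> \<Omega>" using assms(2) m by simp
  then obtain \<phi>'' where "\<forall>x\<in>\<Omega>. (\<phi> has_derivative \<phi>'' x) (at x)" by auto
  then have diff: "\<And>x. x \<in> \<Omega> \<Longrightarrow> \<phi> differentiable (at x)" unfolding differentiable_def by blast
  have ntg: "ntimes_differentiable_on (Suc m) (\<lambda>t. l (\<phi> t)) \<Omega>" by (rule ntimes_linear[OF bl nt])
  have nd: "\<And>s. s \<in> \<Omega> \<Longrightarrow> nondegenerate_at \<phi> \<Omega> s" using assms(3) unfolding nondegenerate_map_def by blast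
  have "{s \<in> \<Omega>. l (\<phi> s) = 0} \<subseteq> {s\<in>\<Omega>. l (\<phi> s) = 0 \<and> \<not> vanish_ord (\<lambda>t. l (\<phi> t)) s (Suc m)}"
  proof (rule subsetI)
    fix s assume s0: "s \<in> {s \<in> \<Omega>. l (\<phi> s) = 0}"
    then have s: "s \<in> \<Omega>" "l (\<phi> s) = 0" by auto
    have "\<not> vanish_ord (\<lambda>t. l (\<phi> t)) s (Suc m)"
    proof
      assume v: "vanish_ord (\<lambda>t. l (\<phi> t)) s (Suc m)"
      show False
        by (rule good_point_false[OF assms(1) s(1) diff nd[OF s(1)] assms(4) assms(5) v]) (use m in auto)
    qed
    then show "s \<in> {s\<in>\<Omega>. l (\<phi> s) = 0 \<and> \<not> vanish_ord (\<lambda>t. l (\<phi> t)) s (Suc m)}" using s by blast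
  qed
  then have neg: "negligible {s \<in> \<Omega>. l (\<phi> s) = 0}"
    using ae_vanish[OF assms(1) ntg] negligible_subset by blast
  have "\<not> s islimpt {t \<in> \<Omega>. l (\<phi> t) = 0}" if "DIM('a) = 1" "s \<in> \<Omega>" for s
    using d1_isolated[OF assms(1) that(2) diff nd[OF that(2)] assms(4) assms(5) that(1)] by blast
  then show ?thesis using neg by blast
qed

end
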